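(* Let $\mathcal{G}$ be a GBS graph of groups, $w=a_0^{k_0}y_1a_1^{k_1}\cdots y_na_n^{k_n}$ a $\mathcal{G}$-factorization, and $\sim_{\mathcal{C}}$ the relation on $\{1,\dots,n\}$ defined by: $i\sim_{\mathcal{C}}j$ iff $y_i=\bar y_j$ and (if $i<j$) $\rho(w_{i,j-1})=0$ and $k_{i,j-1}\in\beta_{y_i}\mathbb{Z}$, resp. (if $j<i$) $\rho(w_{j,i-1})=0$ and $k_{j,i-1}\in\beta_{y_j}\mathbb{Z}$. Define $i\approx j$ iff $i=j$ or there exists $\ell$ with $i\sim_{\mathcal{C}}\ell$ and $\ell\sim_{\mathcal{C}}j$. Then $\approx$ is an equivalence relation on $\{1,\dots,n\}$.
   Context: $\mathcal{G}$ consists of a finite connected graph $Y$ (vertices $V(Y)$, edges $E(Y)$, maps $\iota,\tau:E(Y)\to V(Y)$, fixed-point-free involution $y\mapsto\bar y$ with $\iota(\bar y)=\tau(y)$) and integers $\alpha_y,\beta_y\in\mathbb{Z}\setminus\{0\}$ with $\alpha_y=\beta_{\bar y}$. A $\mathcal{G}$-factorization is a word $a_0^{k_0}y_1a_1^{k_1}\cdots y_na_n^{k_n}$ with $\iota(y_i)=a_{i-1}$, $\tau(y_i)=a_i$, $a_n=a_0$, $k_i\in\mathbb{Z}$. For $0\le i\le j\le n$: $w_{i,j}=a_i^{k_i}y_{i+1}\cdots y_ja_j^{k_j}$ and $k_{i,j}=\sum_{\nu=i}^{j}k_\nu\prod_{\mu=i+1}^{\nu}\alpha_{y_\mu}/\beta_{y_\mu}\in\mathbb{Q}$.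 Fix an orientation $D\subseteq E(Y)$ (one of $y,\bar y$ for each edge); $\rho$ maps words additively to $\mathbb{Z}^D$ with $\rho(a^k)=0$, $\rho(y)=e_y$, $\rho(\bar y)=-e_y$ for $y\in D$. *)

theory Defs
  imports Complex_Main
begin

definition gbs_graph ::
  "'v set \<Rightarrow> 'e set \<Rightarrow> ('e \<Rightarrow> 'v) \<Rightarrow> ('e \<Rightarrow> 'v) \<Rightarrow> ('e \<Rightarrow> 'e)
   \<Rightarrow> ('e \<Rightarrow> int) \<Rightarrow> ('e \<Rightarrow> int) \<Rightarrow> bool" where
  "gbs_graph V E \<iota> \<tau> bar \<alpha> \<beta> \<longleftrightarrow>
     finite V \<and> finite E \<and> V \<noteq> {} \<and>
     (\<forall>y\<in>E. \<iota> y \<in> V \<and> \<tau> y \<in> V) \<and>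
     (\<forall>y\<in>E. bar y \<in> E \<and> bar (bar y) = y \<and> bar y \<noteq> y \<and> \<iota> (bar y) = \<tau> y) \<and>
     (\<forall>u\<in>V. \<forall>v\<in>V. (u, v) \<in> {(\<iota> y, \<tau> y) | y. y \<in> E}\<^sup>*) \<and>
     (\<forall>y\<in>E. \<alpha> y \<noteq> 0 \<and> \<beta> y \<noteq> 0 \<and> \<alpha> y = \<beta> (bar y))"

definition orientation :: "'e set \<Rightarrow> ('e \<Rightarrow> 'e) \<Rightarrow> 'e set \<Rightarrow> bool" where
  "orientation E bar D \<longleftrightarrow> D \<subseteq> E \<and> (\<forall>y\<in>E. (y \<in> D) \<noteq> (bar y \<in> D))"

text \<open>A G-factorization a_0^{k_0} y_1 a_1^{k_1} ... y_n a_n^{k_n}, encoded by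
  a :: nat => 'v (indices 0..n), y :: nat => 'e (indices 1..n), k :: nat => int (indices 0..n).\<close>

definition factorization ::
  "'v set \<Rightarrow> 'e set \<Rightarrow> ('e \<Rightarrow> 'v) \<Rightarrow> ('e \<Rightarrow> 'v) \<Rightarrow> nat \<Rightarrow> (nat \<Rightarrow> 'v) \<Rightarrow> (nat \<Rightarrow> 'e)
   \<Rightarrow> (nat \<Rightarrow> int) \<Rightarrow> bool" where
  "factorization V E \<iota> \<tau> n a y k \<longleftrightarrow>
     (\<forall>i\<in>{0..n}. a i \<in> V) \<and>
     (\<forall>i\<in>{1..n}. y i \<in> E \<and> \<iota> (y i) = a (i - 1) \<and> \<tau> (y i) = a i) \<and>
     a n = a 0"

text \<open>rho of a single edge letter, as an element of Z^D (functions 'e => int supported on D).\<close>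

definition rho_edge :: "('e \<Rightarrow> 'e) \<Rightarrow> 'e set \<Rightarrow> 'e \<Rightarrow> ('e \<Rightarrow> int)" where
  "rho_edge bar D e = (\<lambda>d. if e \<in> D \<and> d = e then 1
                            else if bar e \<in> D \<and> d = bar e then -1 else 0)"

text \<open>rho(w_{i,j}) for w_{i,j} = a_i^{k_i} y_{i+1} ... y_j a_j^{k_j}; rho(a^k) = 0.\<close>

definition rho_w :: "('e \<Rightarrow> 'e) \<Rightarrow> 'e set \<Rightarrow> (nat \<Rightarrow> 'e) \<Rightarrow> nat \<Rightarrow> nat \<Rightarrow> ('e \<Rightarrow> int)" where
  "rho_w bar D y i j = (\<lambda>d. \<Sum>\<mu>\<in>{i+1..j}. rho_edge bar D (y \<mu>) d)"

definition kk :: "('e \<Rightarrow> int) \<Rightarrow> ('e \<Rightarrow> int) \<Rightarrow> (nat \<Rightarrow> 'e) \<Rightarrow> (nat \<Rightarrow> int) \<Rightarrow> nat \<Rightarrow> nat \<Rightarrow> rat" where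
  "kk \<alpha> \<beta> y k i j =
     (\<Sum>\<nu>\<in>{i..j}. of_int (k \<nu>) * (\<Prod>\<mu>\<in>{i+1..\<nu>}. of_int (\<alpha> (y \<mu>)) / of_int (\<beta> (y \<mu>))))"

definition simC ::
  "('e \<Rightarrow> 'e) \<Rightarrow> ('e \<Rightarrow> int) \<Rightarrow> ('e \<Rightarrow> int) \<Rightarrow> 'e set \<Rightarrow> nat \<Rightarrow> (nat \<Rightarrow> 'e) \<Rightarrow> (nat \<Rightarrow> int)
   \<Rightarrow> nat \<Rightarrow> nat \<Rightarrow> bool" where
  "simC bar \<alpha> \<beta> D n y k i j \<longleftrightarrow>
     i \<in> {1..n} \<and> j \<in> {1..n} \<and> y i = bar (y j) \<and>
     (i < j \<longrightarrow> rho_w bar D y i (j - 1) = (\<lambda>_. 0) \<and>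
                 (\<exists>m::int. kk \<alpha> \<beta> y k i (j - 1) = of_int (\<beta> (y i) * m))) \<and>
     (j < i \<longrightarrow> rho_w bar D y j (i - 1) = (\<lambda>_. 0) \<and>
                 (\<exists>m::int. kk \<alpha> \<beta> y k j (i - 1) = of_int (\<beta> (y j) * m)))"

definition approxC ::
  "('e \<Rightarrow> 'e) \<Rightarrow> ('e \<Rightarrow> int) \<Rightarrow> ('e \<Rightarrow> int) \<Rightarrow> 'e set \<Rightarrow> nat \<Rightarrow> (nat \<Rightarrow> 'e) \<Rightarrow> (nat \<Rightarrow> int)
   \<Rightarrow> nat \<Rightarrow> nat \<Rightarrow> bool" where
  "approxC bar \<alpha> \<beta> D n y k i j \<longleftrightarrow>
     i = j \<or> (\<exists>l. simC bar \<alpha> \<beta> D n y k i l \<and> simC bar \<alpha> \<beta> D n y k l j)"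

end

theory Submission
  imports Defs
begin

definition piy :: "('e \<Rightarrow> int) \<Rightarrow> ('e \<Rightarrow> int) \<Rightarrow> (nat \<Rightarrow> 'e) \<Rightarrow> nat \<Rightarrow> rat" where
  "piy \<alpha> \<beta> y i = (\<Prod>\<mu>\<in>{1..i}. of_int (\<alpha> (y \<mu>)) / of_int (\<beta> (y \<mu>)))"

lemma rho_split: "i \<le> j \<Longrightarrow> rho_w bar D y 0 j d = rho_w bar D y 0 i d + rho_w bar D y i j d"
  unfolding rho_w_def
proof -
  assume "i \<le> j"
  then have "{0+1..j} = {1..i} \<union> {i+1..j}" by auto
  then show "(\<Sum>\<mu>\<in>{0+1..j}. rho_edge bar D (y \<mu>) d) = (\<Sum>\<mu>\<in>{0+1..i}. rho_edge bar D (y \<mu>) d) + (\<Sum>\<mu>\<in>{i+1..j}. rho_edge bar D (y \<mu>) d)"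
    by (simp add: sum.union_disjoint)
qed

lemma rho_last: "1 \<le> i \<Longrightarrow> rho_w bar D y 0 i d = rho_w bar D y 0 (i-1) d + rho_edge bar D (y i) d"
  unfolding rho_w_def by (cases i) auto

lemma kk_split:
  assumes "1 \<le> i" "i \<le> Suc j" "\<forall>\<mu>\<in>{1..j}. \<beta> (y \<mu>) \<noteq> 0"
  shows "kk \<alpha> \<beta> y k 0 j - kk \<alpha> \<beta> y k 0 (i-1) = piy \<alpha> \<beta> y i * kk \<alpha> \<beta> y k i j"
proof -
  have U: "{0..j} = {0..i-1} \<union> {i..j}" using assms by auto
  have "kk \<alpha> \<beta> y k 0 j = kk \<alpha> \<beta> y k 0 (i-1) + (\<Sum>\<nu>\<in>{i..j}. of_int (k \<nu>) * (\<Prod>\<mu>\<in>{1..\<nu>}. of_int (\<alpha> (y \<mu>)) / of_int (\<beta> (y \<mu>))))"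
    unfolding kk_def U using assms by (subst sum.union_disjoint) auto
  moreover have "(\<Prod>\<mu>\<in>{1..\<nu>}. of_int (\<alpha> (y \<mu>)) / of_int (\<beta> (y \<mu>)) :: rat) = piy \<alpha> \<beta> y i * (\<Prod>\<mu>\<in>{i+1..\<nu>}. of_int (\<alpha> (y \<mu>)) / of_int (\<beta> (y \<mu>)))"
    if "\<nu> \<in> {i..j}" for \<nu>
  proof -
    have "{1..\<nu>} = {1..i} \<union> {i+1..\<nu>}" using that by auto
    then show ?thesis unfolding piy_def by (simp add: prod.union_disjoint)
  qed
  ultimately show ?thesis unfolding kk_def by (simp add: sum_distrib_left algebra_simps)
qed

lemma cocycle:
  fixes r :: "'e \<Rightarrow> rat"
  assumes "finite D" "D \<subseteq> E" "\<forall>e\<in>E. (e\<in>D) \<noteq> (bar e \<in> D)" "\<forall>e\<in>E. bar e\<in>E \<and> bar (bar e) = e"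
    "\<forall>e\<in>E. r e \<noteq> 0 \<and> r (bar e) = inverse (r e)"
  shows "(\<forall>\<mu>\<in>{a+1..b}. y \<mu> \<in> E) \<Longrightarrow> (\<Prod>\<mu>\<in>{a+1..b}. r (y \<mu>)) = (\<Prod>d\<in>D. r d powi (rho_w bar D y a b d))"
proof (induction b)
  case 0
  then show ?case by (simp add: rho_w_def)
next
  case (Suc b)
  show ?case
  proof (cases "a \<le> b")
    case False
    then have "{a+1..Suc b} = {}" by auto
    then show ?thesis by (simp add: rho_w_def)
  next
    case True
    have ins: "{a+1..Suc b} = insert (Suc b) {a+1..b}" using True by auto
    have IH: "(\<Prod>\<mu>\<in>{a+1..b}. r (y \<mu>)) = (\<Prod>d\<in>D. r d powi (rho_w bar D y a b d))"
      using Suc by auto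
    have e: "y (Suc b) \<in> E" using Suc.prems True by auto
    have rw: "rho_w bar D y a (Suc b) d = rho_w bar D y a b d + rho_edge bar D (y (Suc b)) d" for d
      unfolding rho_w_def ins by simp
    have single: "(\<Prod>d\<in>D. r d powi rho_edge bar D e d) = r e" if "e \<in> E" for e
    proof (cases "e \<in> D")
      case True
      have "(\<Prod>d\<in>D. r d powi rho_edge bar D e d) = (\<Prod>d\<in>D. if d = e then r e else 1)"
        using True assms(3) that by (intro prod.cong) (auto simp: rho_edge_def)
      then show ?thesis using True assms(1) by simp
    next
      case False
      then have b: "bar e \<in> D" using assms(3) that by auto
      have "(\<Prod>d\<in>D. r d powi rho_edge bar D e d) = (\<Prod>d\<in>D. if d = bar e then inverse (r (bar e)) else 1)"
        using False b by (intro prod.cong) (auto simp: rho_edge_def power_int_minus)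
      then show ?thesis using b assms(1,4,5) that by simp
    qed
    have "(\<Prod>d\<in>D. r d powi (rho_w bar D y a (Suc b) d)) = (\<Prod>d\<in>D. r d powi (rho_w bar D y a b d) * r d powi rho_edge bar D (y (Suc b)) d)"
      using assms(2,5) by (intro prod.cong) (auto simp: rw power_int_add)
    also have "\<dots> = (\<Prod>d\<in>D. r d powi (rho_w bar D y a b d)) * r (y (Suc b))"
      using single[OF e] by (simp add: prod.distrib)
    finally show ?thesis using IH ins assms(1) by (simp add: mult.commute)
  qed
qed


definition Mm :: "('e \<Rightarrow> int) \<Rightarrow> ('e \<Rightarrow> int) \<Rightarrow> (nat \<Rightarrow> 'e) \<Rightarrow> nat \<Rightarrow> rat" where
  "Mm \<alpha> \<beta> y i = piy \<alpha> \<beta> y (i-1) * of_int (\<alpha> (y i))"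

definition Cc :: "('e \<Rightarrow> int) \<Rightarrow> ('e \<Rightarrow> int) \<Rightarrow> (nat \<Rightarrow> 'e) \<Rightarrow> (nat \<Rightarrow> int) \<Rightarrow> nat \<Rightarrow> rat set" where
  "Cc \<alpha> \<beta> y k i = {kk \<alpha> \<beta> y k 0 (i-1) + Mm \<alpha> \<beta> y i * of_int m | m. True}"

definition sig where
  "sig bar \<alpha> \<beta> D y k i = (y i, rho_w bar D y 0 (i-1), Cc \<alpha> \<beta> y k i)"

definition th where
  "th bar D t = (case t of (e, p, c) \<Rightarrow> (bar e, (\<lambda>d. p d + rho_edge bar D e d), c))"

lemma coset:
  fixes x x' M :: rat
  shows "{x + M * of_int m | m. True} = {x' + M * of_int m | m. True} \<longleftrightarrow> (\<exists>m. x - x' = M * of_int m)"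
proof
  assume "{x + M * of_int m | m. True} = {x' + M * of_int m | m. True}"
  moreover have "x \<in> {x + M * of_int m | m. True}" by (rule CollectI, rule exI[of _ 0]) simp
  ultimately obtain m where "x = x' + M * of_int m" by auto
  then show "\<exists>m. x - x' = M * of_int m" by (intro exI[of _ m]) simp
next
  assume "\<exists>m. x - x' = M * of_int m"
  then obtain m0 where m0: "x = x' + M * of_int m0" by (auto simp: algebra_simps)
  show "{x + M * of_int m | m. True} = {x' + M * of_int m | m. True}"
  proof (intro set_eqI iffI)
    fix z assume "z \<in> {x + M * of_int m | m. True}"
    then obtain m where "z = x + M * of_int m" by auto
    then have "z = x' + M * of_int (m0 + m)" using m0 by (simp add: algebra_simps)
    then show "z \<in> {x' + M * of_int m | m. True}" by blast
  next
    fix z assume "z \<in> {x' + M * of_int m | m. True}"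
    then obtain m where "z = x' + M * of_int m" by auto
    then have "z = x + M * of_int (m - m0)" using m0 by (simp add: algebra_simps)
    then show "z \<in> {x + M * of_int m | m. True}" by blast
  qed
qed

lemma th_inv:
  assumes "\<forall>e\<in>E. (e\<in>D) \<noteq> (bar e \<in> D)" "\<forall>e\<in>E. bar e\<in>E \<and> bar (bar e) = e" "fst t \<in> E"
  shows "th bar D (th bar D t) = t"
proof -
  obtain e p c where t: "t = (e, p, c)" by (cases t) auto
  have e: "e \<in> E" using assms t by simp
  have bb: "bar (bar e) = e" using assms(2) e by auto
  have "rho_edge bar D e d + rho_edge bar D (bar e) d = 0" for d
  proof (cases "e \<in> D")
    case True
    then have "bar e \<notin> D" using assms(1) e by auto
    then show ?thesis using True unfolding rho_edge_def bb by auto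
  next
    case False
    then have "bar e \<in> D" using assms(1) e by auto
    then show ?thesis using False unfolding rho_edge_def bb by auto
  qed
  then have "(\<lambda>d. p d + rho_edge bar D e d + rho_edge bar D (bar e) d) = p"
    by (simp add: fun_eq_iff add.assoc)
  then show ?thesis unfolding t th_def using bb by simp
qed


lemma lemA:
  assumes HE: "\<forall>e\<in>E. bar e\<in>E \<and> bar (bar e) = e \<and> bar e \<noteq> e"
    and Hab: "\<forall>e\<in>E. \<alpha> e \<noteq> 0 \<and> \<beta> e \<noteq> 0 \<and> \<alpha> e = \<beta> (bar e)"
    and HD: "finite D" "D \<subseteq> E" "\<forall>e\<in>E. (e\<in>D) \<noteq> (bar e \<in> D)"
    and Hy: "\<forall>\<mu>\<in>{1..n}. y \<mu> \<in> E"
    and il: "1 \<le> i" "i < l" "l \<le> n"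
  shows "simC bar \<alpha> \<beta> D n y k i l \<longleftrightarrow> sig bar \<alpha> \<beta> D y k l = th bar D (sig bar \<alpha> \<beta> D y k i)"
proof -
  have Hab': "\<forall>e\<in>E. \<alpha> e \<noteq> 0 \<and> \<beta> e \<noteq> 0" using Hab by blast
  have yi: "y i \<in> E" and yl: "y l \<in> E" using Hy il by auto
  have h1: "y i = bar (y l) \<longleftrightarrow> y l = bar (y i)" using HE yi yl by metis
  have h2: "rho_w bar D y 0 (l-1) d = rho_w bar D y 0 (i-1) d + rho_edge bar D (y i) d + rho_w bar D y i (l-1) d" for d
    using rho_split[of i "l-1" bar D y d] rho_last[of i bar D y d] il by simp
  have h2': "rho_w bar D y 0 (l-1) = (\<lambda>d. rho_w bar D y 0 (i-1) d + rho_edge bar D (y i) d) \<longleftrightarrow> rho_w bar D y i (l-1) = (\<lambda>_. 0)"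
    using h2 by (auto simp: fun_eq_iff)
  define r where "r e = (of_int (\<alpha> e) / of_int (\<beta> e) :: rat)" for e
  have rE: "\<forall>e\<in>E. r e \<noteq> 0 \<and> r (bar e) = inverse (r e)"
    using HE Hab unfolding r_def by (metis divide_eq_0_iff inverse_divide of_int_eq_0_iff)
  have piyi: "piy \<alpha> \<beta> y i = piy \<alpha> \<beta> y (i-1) * r (y i)"
    using il unfolding piy_def r_def by (cases i) auto
  have piyne: "piy \<alpha> \<beta> y i \<noteq> 0"
  proof -
    have "\<forall>\<mu>\<in>{1..i}. of_int (\<alpha> (y \<mu>)) / of_int (\<beta> (y \<mu>)) \<noteq> (0::rat)"
    proof
      fix \<mu> assume "\<mu> \<in> {1..i}"
      then have "y \<mu> \<in> E" using Hy il by auto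
      then have "\<alpha> (y \<mu>) \<noteq> 0" "\<beta> (y \<mu>) \<noteq> 0" using Hab' by blast+
      then show "of_int (\<alpha> (y \<mu>)) / of_int (\<beta> (y \<mu>)) \<noteq> (0::rat)" by simp
    qed
    moreover have "(\<Prod>\<mu>\<in>{1..i}. of_int (\<alpha> (y \<mu>)) / of_int (\<beta> (y \<mu>)) :: rat) = 0 \<longleftrightarrow> (\<exists>\<mu>\<in>{1..i}. of_int (\<alpha> (y \<mu>)) / of_int (\<beta> (y \<mu>)) = (0::rat))"
      by (rule prod_zero_iff) simp
    ultimately show ?thesis unfolding piy_def by blast
  qed
  have kks: "kk \<alpha> \<beta> y k 0 (l-1) - kk \<alpha> \<beta> y k 0 (i-1) = piy \<alpha> \<beta> y i * kk \<alpha> \<beta> y k i (l-1)"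
  proof -
    have "\<forall>\<mu>\<in>{1..l-1}. \<beta> (y \<mu>) \<noteq> 0" using Hy il Hab' by auto
    moreover have "1 \<le> i" "i \<le> Suc (l-1)" using il by auto
    ultimately show ?thesis using kk_split[of i "l-1" \<beta> y \<alpha> k] by blast
  qed
  have Mi: "Mm \<alpha> \<beta> y i = piy \<alpha> \<beta> y i * of_int (\<beta> (y i))"
    unfolding Mm_def piyi r_def using Hab' yi by simp
  have key: "Cc \<alpha> \<beta> y k l = Cc \<alpha> \<beta> y k i \<longleftrightarrow> (\<exists>m::int. kk \<alpha> \<beta> y k i (l-1) = of_int (\<beta> (y i) * m))"
    if yb: "y l = bar (y i)" and r0: "rho_w bar D y i (l-1) = (\<lambda>_. 0)"
  proof -
    have "(\<Prod>\<mu>\<in>{i+1..l-1}. r (y \<mu>)) = (\<Prod>d\<in>D. r d powi (rho_w bar D y i (l-1) d))"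
    proof -
      have "\<forall>\<mu>\<in>{i+1..l-1}. y \<mu> \<in> E" using Hy il by auto
      moreover have "\<forall>e\<in>E. bar e\<in>E \<and> bar (bar e) = e" using HE by blast
      ultimately show ?thesis using cocycle[of D E bar r i "l-1" y] HD rE by blast
    qed
    also have "\<dots> = 1" using r0 by simp
    finally have p1: "(\<Prod>\<mu>\<in>{i+1..l-1}. r (y \<mu>)) = 1" .
    have "{1..l-1} = {1..i} \<union> {i+1..l-1}" using il by auto
    then have "piy \<alpha> \<beta> y (l-1) = piy \<alpha> \<beta> y i * (\<Prod>\<mu>\<in>{i+1..l-1}. r (y \<mu>))"
      unfolding piy_def r_def by (simp add: prod.union_disjoint)
    then have pl: "piy \<alpha> \<beta> y (l-1) = piy \<alpha> \<beta> y i" using p1 by simp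
    have Ml: "Mm \<alpha> \<beta> y l = Mm \<alpha> \<beta> y i"
    proof -
      have "bar (y i) \<in> E" "bar (bar (y i)) = y i" using HE yi by auto
      then have "\<alpha> (bar (y i)) = \<beta> (y i)" using Hab by metis
      then have "Mm \<alpha> \<beta> y l = piy \<alpha> \<beta> y i * of_int (\<beta> (y i))" unfolding Mm_def pl yb by simp
      then show ?thesis using Mi by simp
    qed
    have "Cc \<alpha> \<beta> y k l = Cc \<alpha> \<beta> y k i \<longleftrightarrow> (\<exists>m. kk \<alpha> \<beta> y k 0 (l-1) - kk \<alpha> \<beta> y k 0 (i-1) = Mm \<alpha> \<beta> y i * of_int m)"
      unfolding Cc_def Ml by (rule coset)
    also have "\<dots> \<longleftrightarrow> (\<exists>m::int. kk \<alpha> \<beta> y k i (l-1) = of_int (\<beta> (y i) * m))"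
    proof -
      have "(piy \<alpha> \<beta> y i * kk \<alpha> \<beta> y k i (l-1) = piy \<alpha> \<beta> y i * of_int (\<beta> (y i)) * of_int m) \<longleftrightarrow> (kk \<alpha> \<beta> y k i (l-1) = of_int (\<beta> (y i) * m))" for m
        using piyne by (metis mult.assoc mult_left_cancel of_int_mult)
      then show ?thesis unfolding kks Mi by presburger
    qed
    finally show ?thesis .
  qed
  have "simC bar \<alpha> \<beta> D n y k i l \<longleftrightarrow> y i = bar (y l) \<and> rho_w bar D y i (l-1) = (\<lambda>_. 0) \<and> (\<exists>m::int. kk \<alpha> \<beta> y k i (l-1) = of_int (\<beta> (y i) * m))"
    unfolding simC_def using il by auto
  also have "\<dots> \<longleftrightarrow> y l = bar (y i) \<and> rho_w bar D y 0 (l-1) = (\<lambda>d. rho_w bar D y 0 (i-1) d + rho_edge bar D (y i) d) \<and> Cc \<alpha> \<beta> y k l = Cc \<alpha> \<beta> y k i"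
    using h1 h2' key by blast
  also have "\<dots> \<longleftrightarrow> sig bar \<alpha> \<beta> D y k l = th bar D (sig bar \<alpha> \<beta> D y k i)"
    unfolding sig_def th_def by auto
  finally show ?thesis .
qed


lemma simC_sym:
  assumes HE: "\<forall>e\<in>E. bar e\<in>E \<and> bar (bar e) = e \<and> bar e \<noteq> e"
    and Hy: "\<forall>\<mu>\<in>{1..n}. y \<mu> \<in> E"
  shows "simC bar \<alpha> \<beta> D n y k i l \<longleftrightarrow> simC bar \<alpha> \<beta> D n y k l i"
proof -
  have "i \<in> {1..n} \<Longrightarrow> l \<in> {1..n} \<Longrightarrow> (y i = bar (y l) \<longleftrightarrow> y l = bar (y i))"
    using HE Hy by metis
  then show ?thesis unfolding simC_def by blast
qed

lemma simC_irr:
  assumes HE: "\<forall>e\<in>E. bar e\<in>E \<and> bar (bar e) = e \<and> bar e \<noteq> e"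
    and Hy: "\<forall>\<mu>\<in>{1..n}. y \<mu> \<in> E"
  shows "\<not> simC bar \<alpha> \<beta> D n y k i i"
  using HE Hy unfolding simC_def by metis

lemma lemB:
  assumes HE: "\<forall>e\<in>E. bar e\<in>E \<and> bar (bar e) = e \<and> bar e \<noteq> e"
    and Hab: "\<forall>e\<in>E. \<alpha> e \<noteq> 0 \<and> \<beta> e \<noteq> 0 \<and> \<alpha> e = \<beta> (bar e)"
    and HD: "finite D" "D \<subseteq> E" "\<forall>e\<in>E. (e\<in>D) \<noteq> (bar e \<in> D)"
    and Hy: "\<forall>\<mu>\<in>{1..n}. y \<mu> \<in> E"
    and il: "i \<in> {1..n}" "l \<in> {1..n}"
  shows "simC bar \<alpha> \<beta> D n y k i l \<longleftrightarrow> sig bar \<alpha> \<beta> D y k l = th bar D (sig bar \<alpha> \<beta> D y k i)"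
proof -
  have HE2: "\<forall>e\<in>E. bar e\<in>E \<and> bar (bar e) = e" using HE by blast
  have inv: "th bar D (th bar D (sig bar \<alpha> \<beta> D y k j)) = sig bar \<alpha> \<beta> D y k j" if "j \<in> {1..n}" for j
  proof -
    have "fst (sig bar \<alpha> \<beta> D y k j) \<in> E" using Hy that unfolding sig_def by auto
    then show ?thesis using th_inv[OF HD(3) HE2, of "sig bar \<alpha> \<beta> D y k j"] by simp
  qed
  consider "i < l" | "i = l" | "l < i" by arith
  then show ?thesis
  proof cases
    case 1
    then show ?thesis using lemA[OF HE Hab HD Hy] il by auto
  next
    case 2
    have "fst (sig bar \<alpha> \<beta> D y k i) \<noteq> fst (th bar D (sig bar \<alpha> \<beta> D y k i))"
    proof -
      have "y i \<in> E" using Hy il by blast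
      then have "bar (y i) \<noteq> y i" using HE by blast
      then show ?thesis unfolding sig_def th_def by simp
    qed
    then show ?thesis using 2 simC_irr[OF HE Hy] by metis
  next
    case 3
    have "simC bar \<alpha> \<beta> D n y k i l \<longleftrightarrow> simC bar \<alpha> \<beta> D n y k l i" by (rule simC_sym[OF HE Hy])
    also have "\<dots> \<longleftrightarrow> sig bar \<alpha> \<beta> D y k i = th bar D (sig bar \<alpha> \<beta> D y k l)"
      using lemA[OF HE Hab HD Hy] il 3 by auto
    also have "\<dots> \<longleftrightarrow> sig bar \<alpha> \<beta> D y k l = th bar D (sig bar \<alpha> \<beta> D y k i)"
      using inv il by metis
    finally show ?thesis .
  qed
qed

theorem lemma3p5:
  fixes V :: "'v set" and E :: "'e set"
  assumes "gbs_graph V E \<iota> \<tau> bar \<alpha> \<beta>"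
    and "orientation E bar D"
    and "factorization V E \<iota> \<tau> n a y k"
  shows "equiv {1..n} {(i, j). i \<in> {1..n} \<and> j \<in> {1..n} \<and> approxC bar \<alpha> \<beta> D n y k i j}"
proof -
  have HE: "\<forall>e\<in>E. bar e\<in>E \<and> bar (bar e) = e \<and> bar e \<noteq> e"
    and Hab: "\<forall>e\<in>E. \<alpha> e \<noteq> 0 \<and> \<beta> e \<noteq> 0 \<and> \<alpha> e = \<beta> (bar e)"
    and fE: "finite E"
    using assms(1) unfolding gbs_graph_def by auto
  have HD: "finite D" "D \<subseteq> E" "\<forall>e\<in>E. (e\<in>D) \<noteq> (bar e \<in> D)"
    using assms(2) fE unfolding orientation_def by (auto intro: finite_subset)
  have Hy: "\<forall>\<mu>\<in>{1..n}. y \<mu> \<in> E" using assms(3) unfolding factorization_def by auto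
  define S where "S = sig bar \<alpha> \<beta> D y k"
  define T :: "'e \<times> ('e \<Rightarrow> int) \<times> rat set \<Rightarrow> 'e \<times> ('e \<Rightarrow> int) \<times> rat set" where "T = th bar D"
  have B: "simC bar \<alpha> \<beta> D n y k i l \<longleftrightarrow> i \<in> {1..n} \<and> l \<in> {1..n} \<and> S l = T (S i)" for i l
    using lemB[OF HE Hab HD Hy, of i l] unfolding S_def T_def simC_def by blast
  have inv: "T (T (S j)) = S j" if "j \<in> {1..n}" for j
  proof -
    have HE2: "\<forall>e\<in>E. bar e\<in>E \<and> bar (bar e) = e" using HE by blast
    have "fst (S j) \<in> E" using Hy that unfolding S_def sig_def by auto
    then show ?thesis using th_inv[OF HD(3) HE2, of "S j"] unfolding T_def by simp
  qed
  let ?R = "{(i, j). i \<in> {1..n} \<and> j \<in> {1..n} \<and> approxC bar \<alpha> \<beta> D n y k i j}"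
  have ap: "(i, j) \<in> ?R \<longleftrightarrow> i \<in> {1..n} \<and> j \<in> {1..n} \<and> (i = j \<or> (\<exists>l\<in>{1..n}. S l = T (S i) \<and> S j = T (S l)))" for i j
  proof
    assume "(i, j) \<in> ?R"
    then show "i \<in> {1..n} \<and> j \<in> {1..n} \<and> (i = j \<or> (\<exists>l\<in>{1..n}. S l = T (S i) \<and> S j = T (S l)))"
      unfolding approxC_def B by auto
  next
    assume H: "i \<in> {1..n} \<and> j \<in> {1..n} \<and> (i = j \<or> (\<exists>l\<in>{1..n}. S l = T (S i) \<and> S j = T (S l)))"
    show "(i, j) \<in> ?R"
    proof (cases "i = j")
      case True then show ?thesis using H unfolding approxC_def by simp
    next
      case False
      then obtain l where l: "l \<in> {1..n}" "S l = T (S i)" "S j = T (S l)" using H by blast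
      have "simC bar \<alpha> \<beta> D n y k i l" using l(1,2) H B[of i l] by blast
      moreover have "simC bar \<alpha> \<beta> D n y k l j" using l(1,3) H B[of l j] by blast
      ultimately show ?thesis using H unfolding approxC_def by blast
    qed
  qed
  have ap2: "S j = S i" if ijR: "(i, j) \<in> ?R" for i j
  proof (cases "i = j")
    case True then show ?thesis by simp
  next
    case False
    then obtain l where l: "l \<in> {1..n}" "S l = T (S i)" "S j = T (S l)" and i: "i \<in> {1..n}"
      using ijR unfolding ap by blast
    have "S j = T (T (S i))" using l by simp
    also have "\<dots> = S i" using inv[OF i] .
    finally show ?thesis .
  qed
  have mk: "(i, j) \<in> ?R" if "i \<in> {1..n}" "j \<in> {1..n}" "l \<in> {1..n}" "S l = T (S i)" "S j = T (S l)" for i j l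
    using that unfolding ap by blast
  have dom: "i \<in> {1..n} \<and> j \<in> {1..n}" if "(i, j) \<in> ?R" for i j
    using that unfolding ap by blast
  show ?thesis
  proof (rule equivI)
    show "?R \<subseteq> {1..n} \<times> {1..n}" by auto
  next
    show "refl_on {1..n} ?R" by (rule refl_onI) (auto simp: approxC_def)
  next
    show "sym ?R"
    proof (rule symI)
      fix i j assume ij: "(i, j) \<in> ?R"
      show "(j, i) \<in> ?R"
      proof (cases "i = j")
        case True then show ?thesis using ij by simp
      next
        case False
        then obtain l where l: "l \<in> {1..n}" "S l = T (S i)" "S j = T (S l)"
          using ij unfolding ap by blast
        have d: "i \<in> {1..n}" "j \<in> {1..n}" using dom[OF ij] by auto
        have e: "S j = S i" using ap2[OF ij] .
        have "S l = T (S j)" using l(2) e by simp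
        moreover have "S i = T (S l)" using l(2) inv[OF d(1)] by simp
        ultimately show ?thesis using mk[OF d(2) d(1) l(1)] by blast
      qed
    qed
  next
    show "trans ?R"
    proof (rule transI)
      fix i j m assume ij: "(i, j) \<in> ?R" and jm: "(j, m) \<in> ?R"
      have eq: "S j = S i" using ap2[OF ij] .
      show "(i, m) \<in> ?R"
      proof (cases "j = m")
        case True then show ?thesis using ij by simp
      next
        case False
        then obtain l where l: "l \<in> {1..n}" "S l = T (S j)" "S m = T (S l)" using jm unfolding ap by blast
        have d: "i \<in> {1..n}" "m \<in> {1..n}" using dom[OF ij] dom[OF jm] by auto
        have "S l = T (S i)" using l(2) eq by simp
        then show ?thesis using mk[OF d(1) d(2) l(1)] l(3) by blast
      qed
    qed
  qed
qed

end
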